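(* Let $N\ge2$, let $u\in C(S^{N-1},(0,\infty))$ be nonconstant and separable in $S^{N-1}$, and let $M\in O(N)$ and $h_1>h_2$ in $[-1,1]$ be such that $u_M^{-1}(\max_{S^{N-1}}u_M)=\{x\in S^{N-1}:x_N\ge h_1\}$, $u_M^{-1}(\min_{S^{N-1}}u_M)=\{x\in S^{N-1}:x_N\le h_2\}$, $u_M$ is constant on each set $\{x\in S^{N-1}:x_N=h\}$, and $\alpha\mapsto u_M(0_{N-2},\cos\alpha,\sin\alpha)$ is nonincreasing on $[\pi/2,3\pi/2]$ (such $M$ exists). Let $H$ be an open half-space in $\mathbb{R}^N$ with $0\in\partial H$. Then: (i) if $M^{-1}(0_{N-1},1)\in H$, then $u(x)\ge u(\sigma_Hx)$ for all $x\in H\cap S^{N-1}$; (ii) if $M^{-1}(0_{N-1},1)\in\mathbb{R}^N\setminus\overline{H}$, then $u(x)\le u(\sigma_Hx)$ for all $x\in H\cap S^{N-1}$.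
   Context: $S^{N-1}$ is the unit sphere in $\mathbb{R}^N$ centered at $0$; $O(N)$ is the orthogonal group; for $M\in O(N)$, $u_M(x):=u(M^{-1}x)$; $0_k$ is the zero vector of $\mathbb{R}^k$; $\overline{H}$ is the closure of $H$. $\sigma_H$ denotes reflection across $\partial H$. A function $u\in C(S^{N-1},\mathbb{R})$ is separable in $S^{N-1}$ if for every open half-space $H$ with $0\in\partial H$, either $u(x)\ge u(\sigma_Hx)$ for all $x\in H\cap S^{N-1}$, or $u(x)\le u(\sigma_Hx)$ for all $x\in H\cap S^{N-1}$. *)

theory Defs
  imports "HOL-Analysis.Analysis"
begin

text \<open>Points of R^N are vectors of type real^'n, where the index type 'n is finite and
linearly ordered; its elements are the coordinates 1..N in increasing order.
The last coordinate (x_N) is the largest index, the penultimate one (x_{N-1})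
is the second largest.\<close>

definition last_idx :: "'n::{finite,linorder}" where
  "last_idx = Max UNIV"

definition penult_idx :: "'n::{finite,linorder}" where
  "penult_idx = Max (UNIV - {last_idx})"

definition hs_reflect :: "'a::real_inner \<Rightarrow> 'a \<Rightarrow> 'a" where
  "hs_reflect a x = x - (2 * (a \<bullet> x) / (a \<bullet> a)) *\<^sub>R a"

text \<open>Open half-spaces H with 0 on the boundary are exactly the sets {x. 0 < a \<bullet> x}, a \<noteq> 0.\<close>
definition separable_sphere :: "('a::real_inner \<Rightarrow> real) \<Rightarrow> bool" where
  "separable_sphere u \<longleftrightarrow>
     (\<forall>a. a \<noteq> 0 \<longrightarrow>
        (\<forall>x\<in>{x. 0 < a \<bullet> x} \<inter> sphere 0 1. u x \<ge> u (hs_reflect a x)) \<or>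
        (\<forall>x\<in>{x. 0 < a \<bullet> x} \<inter> sphere 0 1. u x \<le> u (hs_reflect a x)))"

definition circ_pt :: "real \<Rightarrow> real^'n::{finite,linorder}" where
  "circ_pt t = (\<chi> i. if i = last_idx then sin t else if i = penult_idx then cos t else 0)"

end

theory Submission
  imports Defs
begin

lemma penult_ne_last:
  assumes "CARD('n::{finite,linorder}) \<ge> 2"
  shows "(penult_idx::'n) \<noteq> last_idx"
proof -
  have "UNIV - {last_idx::'n} \<noteq> {}"
  proof
    assume "UNIV - {last_idx::'n} = {}"
    then have "(UNIV::'n set) = {last_idx}" by auto
    then have "CARD('n) = card {last_idx::'n}" by (rule arg_cong)
    then have "CARD('n) = 1" by simp
    with assms show False by simp
  qed
  then have "(penult_idx::'n) \<in> UNIV - {last_idx}"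
    unfolding penult_idx_def by (intro Max_in) auto
  then show ?thesis by auto
qed

lemma circ_pt_norm:
  fixes t :: real
  assumes "CARD('n::{finite,linorder}) \<ge> 2"
  shows "norm (circ_pt t :: real^'n::{finite,linorder}) = 1"
proof -
  have ne: "(penult_idx::'n) \<noteq> last_idx" using penult_ne_last[OF assms] .
  have "circ_pt t \<bullet> (circ_pt t :: real^'n::{finite,linorder}) =
        (\<Sum>i\<in>UNIV. (if i = (last_idx::'n::{finite,linorder}) then (sin t)^2 else 0) + (if i = penult_idx then (cos t)^2 else 0))"
    unfolding inner_vec_def circ_pt_def using ne
    by (intro sum.cong) (auto simp: power2_eq_square)
  also have "\<dots> = (sin t)^2 + (cos t)^2"
    by (simp add: sum.distrib)
  also have "\<dots> = 1" by simp
  finally show ?thesis by (simp add: norm_eq_1)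
qed

lemma circ_pt_last: "(circ_pt t :: real^'n::{finite,linorder}) $ last_idx = sin t"
  by (simp add: circ_pt_def)

lemma hs_reflect_norm:
  fixes a x :: "'a::real_inner"
  assumes "a \<noteq> 0"
  shows "norm (hs_reflect a x) = norm x"
proof -
  have aa: "a \<bullet> a > 0" using assms by simp
  have "hs_reflect a x \<bullet> hs_reflect a x = x \<bullet> x"
    unfolding hs_reflect_def using aa
    by (simp add: inner_diff_left inner_diff_right inner_commute field_simps power2_eq_square)
  then show ?thesis by (simp add: norm_eq_sqrt_inner)
qed

lemma hs_reflect_inner:
  fixes a x e :: "'a::real_inner"
  shows "hs_reflect a x \<bullet> e = x \<bullet> e - 2 * (a \<bullet> x) / (a \<bullet> a) * (a \<bullet> e)"
  unfolding hs_reflect_def by (simp add: inner_diff_left)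

lemma inner_transpose_mv:
  fixes M :: "real^'n^'n" and v w :: "real^'n"
  shows "v \<bullet> (transpose M *v w) = (M *v v) \<bullet> w"
  by (metis transpose_matrix_vector dot_lmul_matrix inner_commute)

lemma orth_inv:
  fixes M :: "real^'n^'n"
  assumes "orthogonal_matrix M"
  shows "matrix_inv M = transpose M"
proof -
  have tm: "transpose M ** M = mat 1" "M ** transpose M = mat 1"
    using assms by (auto simp: orthogonal_matrix_def)
  have "M ** matrix_inv M = mat 1 \<and> matrix_inv M ** M = mat 1"
    unfolding matrix_inv_def by (rule someI[where x="transpose M"]) (use tm in auto)
  then have pm: "matrix_inv M ** M = mat 1" by blast
  have "matrix_inv M = matrix_inv M ** (M ** transpose M)" using tm by simp
  also have "\<dots> = (matrix_inv M ** M) ** transpose M" by (simp add: matrix_mul_assoc)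
  also have "\<dots> = transpose M" using pm by simp
  finally show ?thesis .
qed

theorem corollary2p3:
  fixes u :: "real^('n::{finite,linorder}) \<Rightarrow> real"
    and M :: "real^('n::{finite,linorder})^('n::{finite,linorder})"
    and h1 h2 :: real
    and a :: "real^('n::{finite,linorder})"
    and H :: "(real^('n::{finite,linorder})) set"
  assumes N2: "CARD('n::{finite,linorder}) \<ge> 2"
    and cont: "continuous_on (sphere 0 1) u"
    and pos: "\<forall>x\<in>sphere 0 1. u x > 0"
    and noncst: "\<exists>x\<in>sphere 0 1. \<exists>y\<in>sphere 0 1. u x \<noteq> u y"
    and sep: "separable_sphere u"
    and orth: "orthogonal_matrix M"
    and h12: "h2 < h1" "-1 \<le> h2" "h1 \<le> 1"
    and maxset: "{x\<in>sphere 0 1. u (matrix_inv M *v x) = (SUP y\<in>sphere 0 1. u (matrix_inv M *v y))}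
                 = {x\<in>sphere 0 1. x $ last_idx \<ge> h1}"
    and minset: "{x\<in>sphere 0 1. u (matrix_inv M *v x) = (INF y\<in>sphere 0 1. u (matrix_inv M *v y))}
                 = {x\<in>sphere 0 1. x $ last_idx \<le> h2}"
    and levels: "\<forall>h. \<forall>x\<in>sphere 0 1. \<forall>y\<in>sphere 0 1.
                   x $ last_idx = h \<and> y $ last_idx = h \<longrightarrow>
                   u (matrix_inv M *v x) = u (matrix_inv M *v y)"
    and mono: "\<forall>s t. pi/2 \<le> s \<and> s \<le> t \<and> t \<le> 3*pi/2 \<longrightarrow>
                 u (matrix_inv M *v circ_pt t) \<le> u (matrix_inv M *v circ_pt s)"
    and a: "a \<noteq> 0"
    and H: "H = {x. 0 < a \<bullet> x}"
  shows "(matrix_inv M *v axis last_idx 1 \<in> H \<longrightarrow>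
            (\<forall>x\<in>H \<inter> sphere 0 1. u x \<ge> u (hs_reflect a x)))
       \<and> (matrix_inv M *v axis last_idx 1 \<in> UNIV - closure H \<longrightarrow>
            (\<forall>x\<in>H \<inter> sphere 0 1. u x \<le> u (hs_reflect a x)))"
proof -
  define P where "P = matrix_inv M"
  define e where "e = P *v axis last_idx 1"
  have P: "P = transpose M" using orth_inv[OF orth] by (simp add: P_def)
  have PM: "P *v (M *v x) = x" for x
    using orth by (simp add: P matrix_vector_mul_assoc orthogonal_matrix_def)
  have normM: "norm (M *v x) = norm x" for x
  proof -
    have "(M *v x) \<bullet> (M *v x) = x \<bullet> x"
      using inner_transpose_mv[of x M "M *v x"] PM by (simp add: P)
    then show ?thesis by (simp add: norm_eq_sqrt_inner)
  qed
  have compM: "(M *v x) $ last_idx = x \<bullet> e" for x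
    unfolding e_def P inner_transpose_mv by (simp add: inner_axis)
  have key: "u (P *v y) \<le> u (P *v z)"
    if y: "y \<in> sphere 0 1" and z: "z \<in> sphere 0 1" and le: "y $ last_idx \<le> z $ last_idx" for y z
  proof -
    have by1: "\<bar>y $ last_idx\<bar> \<le> 1" using component_le_norm_cart[of y] y by simp
    have bz1: "\<bar>z $ last_idx\<bar> \<le> 1" using component_le_norm_cart[of z] z by simp
    define s where "s = pi - arcsin (z $ last_idx)"
    define t where "t = pi - arcsin (y $ last_idx)"
    have sy: "sin t = y $ last_idx" unfolding t_def using by1 by simp
    have sz: "sin s = z $ last_idx" unfolding s_def using bz1 by simp
    have "arcsin (y $ last_idx) \<le> arcsin (z $ last_idx)"
      using by1 bz1 le by (intro arcsin_le_arcsin) auto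
    then have st: "s \<le> t" unfolding s_def t_def by simp
    have "arcsin (z $ last_idx) \<le> pi/2" "-(pi/2) \<le> arcsin (y $ last_idx)"
      using by1 bz1 arcsin_bounded[of "z $ last_idx"] arcsin_bounded[of "y $ last_idx"] by auto
    then have "pi/2 \<le> s" "t \<le> 3*pi/2" unfolding s_def t_def by auto
    with st mono have m: "u (P *v circ_pt t) \<le> u (P *v circ_pt s)" by (auto simp: P_def)
    have cs: "(circ_pt s :: real^'n::{finite,linorder}) \<in> sphere 0 1" "(circ_pt t :: real^'n::{finite,linorder}) \<in> sphere 0 1"
      using circ_pt_norm[OF N2] by auto
    have "u (P *v y) = u (P *v circ_pt t)"
      using levels y cs sy circ_pt_last[of t] unfolding P_def by metis
    moreover have "u (P *v z) = u (P *v circ_pt s)"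
      using levels z cs sz circ_pt_last[of s] unfolding P_def by metis
    ultimately show ?thesis using m by simp
  qed
  have uu: "u r \<le> u x" if "x \<in> sphere 0 1" "r \<in> sphere 0 1" "r \<bullet> e \<le> x \<bullet> e" for x r
    using key[of "M *v r" "M *v x"] that by (simp add: PM normM compM)
  have aa: "a \<bullet> a > 0" using a by simp
  show ?thesis
  proof (intro conjI impI ballI)
    fix x assume eH: "matrix_inv M *v axis last_idx 1 \<in> H" and x: "x \<in> H \<inter> sphere 0 1"
    have ae: "a \<bullet> e > 0" using eH H by (simp add: e_def P_def)
    have ax: "a \<bullet> x > 0" using x H by simp
    have "2 * (a \<bullet> x) / (a \<bullet> a) * (a \<bullet> e) \<ge> 0" using ae ax aa by simp
    then have "hs_reflect a x \<bullet> e \<le> x \<bullet> e" by (simp add: hs_reflect_inner)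
    then show "u (hs_reflect a x) \<le> u x"
      using uu x hs_reflect_norm[OF a, of x] by simp
  next
    fix x assume eH: "matrix_inv M *v axis last_idx 1 \<in> UNIV - closure H" and x: "x \<in> H \<inter> sphere 0 1"
    have ae: "a \<bullet> e < 0" using eH H a by (auto simp: e_def P_def)
    have ax: "a \<bullet> x > 0" using x H by simp
    have "2 * (a \<bullet> x) / (a \<bullet> a) * (a \<bullet> e) \<le> 0" using ae ax aa
      by (intro mult_nonneg_nonpos divide_nonneg_pos) auto
    then have "x \<bullet> e \<le> hs_reflect a x \<bullet> e" by (simp add: hs_reflect_inner)
    then show "u x \<le> u (hs_reflect a x)"
      using uu x hs_reflect_norm[OF a, of x] by simp
  qed
qed

end
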